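(* Fix a realization $(\omega)$ for which $\frac1N\sum_{i=1}^NS(\omega_i)\to\int S\,d\mu<\infty$. Let $Q$ be an accumulation point of $(\mathcal L(\nu^{N,(\omega)}))_N$ in $\mathcal M_1(\mathbf D([0,T],(\mathcal M_1,v)))$ and let $\nu\sim Q$. For $t\in[0,T]$ let $\nu_{t,2}(A)=\nu_t(\mathbf S^1\times A)$, $A$ Borel in $\mathbb R$, be the second marginal of $\nu_t$. Then for all $t\in[0,T]$, $$\int_{\mathbb R}\sup_{x\in\mathbf S^1}|c(x,\pi)|\,\nu_{t,2}(d\pi)\le\int_{\mathbb R}\sup_{x\in\mathbf S^1}|c(x,\pi)|\,\mu(d\pi).$$
   Context: Standing setting (A). $T>0$ is fixed and $\mathbf S^1=\mathbb R/2\pi\mathbb Z$. The function $b:\mathbf S^1\times\mathbf S^1\times\mathbb R\to\mathbb R$ is bounded and Lipschitz continuous in its first two variables, uniformly in the third; $c:\mathbf S^1\times\mathbb R\to\mathbb R$ is Lipschitz continuous in its first variable, uniformly in the second (but possibly unbounded), and $S(\omega):=\sup_{x\in\mathbf S^1}|c(x,\omega)|$ is continuous in $\omega$. The disorder $(\omega)=(\omega_i)_{i\ge1}$ is a sequence of real random variables, each with law $\mu$. For a fixed realization $(\omega)$, under $\mathbf P$, $(B^i)_{i\ge1}$ are independent standard Brownian motions, $(\xi^i)$ are $\mathbf S^1$-valued initial conditions independent of the $B^i$, and $x^{i,N}$ is the ($\mathbf S^1$-projected) solution of $x^{i,N}_t=\xi^i+\frac1N\sum_{j=1}^N\int_0^t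 b(x^{i,N}_s,x^{j,N}_s,\omega_j)ds+\int_0^tc(x^{i,N}_s,\omega_i)ds+B^i_t$. The empirical measure is $\nu^{N,(\omega)}_t=\frac1N\sum_{i=1}^N\delta_{(x^{i,N}_t,\omega_i)}$. $(\mathcal M_1,v)$ denotes probability measures on $\mathbf S^1\times\mathbb R$ with the vague topology (tested against continuous compactly supported functions); $\mathbf D([0,T],X)$ is the Skorokhod space of càdlàg paths. *)

theory Defs
  imports "HOL-Probability.Probability"
begin

section \<open>The circle S^1 = R / 2 pi Z, represented by the fundamental domain [0, 2 pi)\<close>

definition circ_proj :: "real \<Rightarrow> real" where
  "circ_proj x = x - 2 * pi * real_of_int \<lfloor>x / (2 * pi)\<rfloor>"

definition periodic1 :: "(real \<Rightarrow> 'a) \<Rightarrow> bool" where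
  "periodic1 f \<longleftrightarrow> (\<forall>x. f (x + 2 * pi) = f x)"

text \<open>Probability measures on S^1 x R, as Borel probability measures on R x R
  concentrated on [0, 2 pi) x R.\<close>
definition M1 :: "(real \<times> real) measure set" where
  "M1 = {m. space m = UNIV \<and> sets m = sets borel \<and> prob_space m
            \<and> emeasure m ({0..<2 * pi} \<times> UNIV) = 1}"

text \<open>Continuous compactly supported test functions on S^1 x R, lifted to
  R x R (2 pi-periodic in the first variable).\<close>
definition Cc_test :: "(real \<times> real \<Rightarrow> real) set" where
  "Cc_test = {g. continuous_on UNIV g \<and> (\<forall>x p. g (x + 2 * pi, p) = g (x, p))
               \<and> (\<exists>R. \<forall>x p. \<bar>p\<bar> > R \<longrightarrow> g (x, p) = 0)}"

definition clampT :: "real \<Rightarrow> real \<Rightarrow> real" where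
  "clampT T t = min T (max 0 t)"

text \<open>Cadlag paths with values in (M1, vague topology); the vague topology is the
  initial topology of the maps m \<mapsto> \<integral> g dm, g \<in> Cc_test.\<close>
definition Dsp :: "real \<Rightarrow> (real \<Rightarrow> (real \<times> real) measure) set" where
  "Dsp T = {f. (\<forall>t. f t \<in> M1) \<and> (\<forall>t. f t = f (clampT T t))
     \<and> (\<forall>t\<in>{0..<T}. \<forall>g\<in>Cc_test.
           ((\<lambda>s. integral\<^sup>L (f s) g) \<longlongrightarrow> integral\<^sup>L (f t) g) (at_right t))
     \<and> (\<forall>t\<in>{0<..T}. \<exists>m\<in>M1. \<forall>g\<in>Cc_test.
           ((\<lambda>s. integral\<^sup>L (f s) g) \<longlongrightarrow> integral\<^sup>L m g) (at_left t))}"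

definition time_change :: "real \<Rightarrow> (real \<Rightarrow> real) \<Rightarrow> bool" where
  "time_change T l \<longleftrightarrow> strict_mono_on {0..T} l \<and> continuous_on {0..T} l
     \<and> l ` {0..T} = {0..T}"

definition skor_conv :: "real \<Rightarrow> (nat \<Rightarrow> real \<Rightarrow> (real \<times> real) measure)
    \<Rightarrow> (real \<Rightarrow> (real \<times> real) measure) \<Rightarrow> bool" where
  "skor_conv T fs f \<longleftrightarrow> (\<exists>l :: nat \<Rightarrow> real \<Rightarrow> real.
      (\<forall>n. time_change T (l n))
    \<and> (\<lambda>n. SUP t\<in>{0..T}. \<bar>l n t - t\<bar>) \<longlonglongrightarrow> 0
    \<and> (\<forall>g\<in>Cc_test. (\<lambda>n. SUP t\<in>{0..T}.
          \<bar>integral\<^sup>L (fs n (l n t)) g - integral\<^sup>L (f t) g\<bar>) \<longlonglongrightarrow> 0))"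

text \<open>Open sets of the (metrisable, hence sequential) Skorokhod topology.\<close>
definition skor_open :: "real \<Rightarrow> (real \<Rightarrow> (real \<times> real) measure) set \<Rightarrow> bool" where
  "skor_open T U \<longleftrightarrow> U \<subseteq> Dsp T \<and> (\<forall>f\<in>U. \<forall>fs. (\<forall>n. fs n \<in> Dsp T) \<and> skor_conv T fs f
       \<longrightarrow> (\<forall>\<^sub>F n in sequentially. fs n \<in> U))"

definition skor_borel :: "real \<Rightarrow> (real \<Rightarrow> (real \<times> real) measure) measure" where
  "skor_borel T = sigma (Dsp T) {U. skor_open T U}"

definition skor_Cb :: "real \<Rightarrow> ((real \<Rightarrow> (real \<times> real) measure) \<Rightarrow> real) set" where
  "skor_Cb T = {F. (\<exists>K. \<forall>f\<in>Dsp T. \<bar>F f\<bar> \<le> K)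
     \<and> (\<forall>fs f. (\<forall>n. fs n \<in> Dsp T) \<and> f \<in> Dsp T \<and> skor_conv T fs f
          \<longrightarrow> (\<lambda>n. F (fs n)) \<longlonglongrightarrow> F f)}"

definition skor_M1 :: "real \<Rightarrow> (real \<Rightarrow> (real \<times> real) measure) measure set" where
  "skor_M1 T = {Q. prob_space Q \<and> space Q = Dsp T \<and> sets Q = sets (skor_borel T)}"

definition skor_weak_conv :: "real \<Rightarrow> (nat \<Rightarrow> (real \<Rightarrow> (real \<times> real) measure) measure)
    \<Rightarrow> (real \<Rightarrow> (real \<times> real) measure) measure \<Rightarrow> bool" where
  "skor_weak_conv T Qs Q \<longleftrightarrow>
     (\<forall>F\<in>skor_Cb T. (\<lambda>n. integral\<^sup>L (Qs n) F) \<longlonglongrightarrow> integral\<^sup>L Q F)"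

definition (in prob_space) brownian_motion :: "('a \<Rightarrow> real \<Rightarrow> real) \<Rightarrow> bool" where
  "brownian_motion B \<longleftrightarrow>
     (\<forall>t. random_variable borel (\<lambda>w. B w t))
   \<and> (\<forall>w\<in>space M. B w 0 = 0 \<and> continuous_on UNIV (B w))
   \<and> (\<forall>s t. 0 \<le> s \<and> s < t \<longrightarrow>
        distributed M lborel (\<lambda>w. B w t - B w s)
          (\<lambda>x. ennreal (normal_density 0 (sqrt (t - s)) x)))
   \<and> (\<forall>(n::nat) ts. 0 \<le> ts 0 \<and> strict_mono_on {..n} ts \<longrightarrow>
        indep_vars (\<lambda>_. borel) (\<lambda>k w. B w (ts (Suc k)) - B w (ts k)) {..<n})"

definition supc :: "(real \<Rightarrow> real \<Rightarrow> real) \<Rightarrow> real \<Rightarrow> real" where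
  "supc c w = (SUP x\<in>{0..<2 * pi}. \<bar>c x w\<bar>)"

definition empirical :: "real \<Rightarrow> nat \<Rightarrow> (nat \<Rightarrow> 'o \<Rightarrow> real \<Rightarrow> real) \<Rightarrow> (nat \<Rightarrow> real)
    \<Rightarrow> 'o \<Rightarrow> real \<Rightarrow> (real \<times> real) measure" where
  "empirical T N X om w t = distr (uniform_measure (count_space UNIV) {..<N}) borel
      (\<lambda>i. (circ_proj (X i w (clampT T t)), om i))"

end

theory Submission
  imports Defs
begin

definition psi :: "real \<Rightarrow> real \<Rightarrow> real" where
  "psi a x = min 1 (max 0 (x - a))"

definition GG :: "real \<Rightarrow> (real \<times> real \<Rightarrow> real) \<Rightarrow> real \<Rightarrow> (real \<Rightarrow> (real \<times> real) measure) \<Rightarrow> real" where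
  "GG T g a f = (SUP t\<in>{0..T}. psi a (integral\<^sup>L (f t) g))"

lemma psi_bounds: "0 \<le> psi a x" "psi a x \<le> 1"
  by (auto simp: psi_def)

lemma psi_lip: "\<bar>psi a x - psi a y\<bar> \<le> \<bar>x - y\<bar>"
  by (auto simp: psi_def)

lemma M1_integral_bounds:
  fixes K :: real
  assumes m: "m \<in> M1" and g: "continuous_on UNIV g" and gb: "\<And>z. 0 \<le> g z \<and> g z \<le> K"
  shows "0 \<le> integral\<^sup>L m g" "integral\<^sup>L m g \<le> K" "integrable m g"
proof -
  interpret prob_space m using m by (simp add: M1_def)
  have sm: "sets m = sets borel" using m by (simp add: M1_def)
  have gm: "g \<in> borel_measurable m"
    using borel_measurable_continuous_onI[OF g] measurable_cong_sets[OF sm refl] by blast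
  show int: "integrable m g"
    by (rule integrable_const_bound[where B=K]) (use gb gm in auto)
  show "0 \<le> integral\<^sup>L m g" using gb by (simp add: integral_nonneg)
  show "integral\<^sup>L m g \<le> K" using int gb by (intro integral_le_const) auto
qed

lemma sup_diff_le:
  fixes u v :: "'a \<Rightarrow> real"
  assumes A: "A \<noteq> {}" and bu: "bdd_above (u ` A)" and bv: "bdd_above (v ` A)"
    and d: "\<And>t. t \<in> A \<Longrightarrow> \<bar>u t - v t\<bar> \<le> d"
  shows "\<bar>(SUP t\<in>A. u t) - (SUP t\<in>A. v t)\<bar> \<le> d"
proof -
  have 1: "(SUP t\<in>A. u t) \<le> (SUP t\<in>A. v t) + d"
  proof (rule cSUP_least[OF A])
    fix t assume t: "t \<in> A"
    have "v t \<le> (SUP t\<in>A. v t)" by (rule cSUP_upper[OF t bv])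
    then show "u t \<le> (SUP t\<in>A. v t) + d" using d[OF t] by linarith
  qed
  have 2: "(SUP t\<in>A. v t) \<le> (SUP t\<in>A. u t) + d"
  proof (rule cSUP_least[OF A])
    fix t assume t: "t \<in> A"
    have "u t \<le> (SUP t\<in>A. u t)" by (rule cSUP_upper[OF t bu])
    then show "v t \<le> (SUP t\<in>A. u t) + d" using d[OF t] by linarith
  qed
  from 1 2 show ?thesis by linarith
qed

context
  fixes T K :: real and g :: "real \<times> real \<Rightarrow> real" and a :: real
  assumes T: "0 \<le> T" and gC: "g \<in> Cc_test" and gb: "\<And>z. 0 \<le> g z \<and> g z \<le> K"
begin

lemma gcont: "continuous_on UNIV g" using gC by (simp add: Cc_test_def)

lemma GG_bdd:
  assumes "\<And>t. f t \<in> M1"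
  shows "bdd_above ((\<lambda>t. psi a (integral\<^sup>L (f t) g)) ` {0..T})"
  using psi_bounds by (auto intro!: bdd_aboveI[where M=1])

lemma GG_upper:
  assumes "\<And>t. f t \<in> M1" "t \<in> {0..T}"
  shows "psi a (integral\<^sup>L (f t) g) \<le> GG T g a f"
  unfolding GG_def by (rule cSUP_upper[OF assms(2) GG_bdd[OF assms(1)]])

lemma GG_bounds:
  assumes "\<And>t. f t \<in> M1"
  shows "0 \<le> GG T g a f" "GG T g a f \<le> 1"
proof -
  have "0 \<le> psi a (integral\<^sup>L (f 0) g)" by (rule psi_bounds)
  also have "\<dots> \<le> GG T g a f" using GG_upper[OF assms, of 0] T by auto
  finally show "0 \<le> GG T g a f" .
  show "GG T g a f \<le> 1" unfolding GG_def
    using T psi_bounds by (intro cSUP_least) auto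
qed

lemma GG_cont:
  assumes fs: "\<And>n. fs n \<in> Dsp T" and f: "f \<in> Dsp T" and conv: "skor_conv T fs f"
  shows "(\<lambda>n. GG T g a (fs n)) \<longlonglongrightarrow> GG T g a f"
proof -
  obtain l where l: "\<And>n. time_change T (l n)"
    and lc: "\<forall>g\<in>Cc_test. (\<lambda>n. SUP t\<in>{0..T}.
          \<bar>integral\<^sup>L (fs n (l n t)) g - integral\<^sup>L (f t) g\<bar>) \<longlonglongrightarrow> 0"
    using conv unfolding skor_conv_def by blast
  have fsM: "\<And>n t. fs n t \<in> M1" using fs by (simp add: Dsp_def)
  have fM: "\<And>t. f t \<in> M1" using f by (simp add: Dsp_def)
  define d where "d n = (SUP t\<in>{0..T}. \<bar>integral\<^sup>L (fs n (l n t)) g - integral\<^sup>L (f t) g\<bar>)" for n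
  have d0: "d \<longlonglongrightarrow> 0" using lc gC unfolding d_def by blast
  have bnd: "\<And>m. m \<in> M1 \<Longrightarrow> 0 \<le> integral\<^sup>L m g \<and> integral\<^sup>L m g \<le> K"
    using M1_integral_bounds[OF _ gcont gb] by blast
  have le: "\<bar>GG T g a (fs n) - GG T g a f\<bar> \<le> d n" for n
  proof -
    have img: "l n ` {0..T} = {0..T}" using l[of n] by (simp add: time_change_def)
    have "GG T g a (fs n) = (SUP t\<in>{0..T}. psi a (integral\<^sup>L (fs n (l n t)) g))"
      unfolding GG_def by (subst img[symmetric]) (simp add: image_comp)
    moreover have "\<bar>(SUP t\<in>{0..T}. psi a (integral\<^sup>L (fs n (l n t)) g))
         - (SUP t\<in>{0..T}. psi a (integral\<^sup>L (f t) g))\<bar> \<le> d n"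
    proof (rule sup_diff_le)
      show "{0..T} \<noteq> {}" using T by auto
      show "bdd_above ((\<lambda>t. psi a (integral\<^sup>L (fs n (l n t)) g)) ` {0..T})"
        using psi_bounds by (auto intro!: bdd_aboveI[where M=1])
      show "bdd_above ((\<lambda>t. psi a (integral\<^sup>L (f t) g)) ` {0..T})"
        using psi_bounds by (auto intro!: bdd_aboveI[where M=1])
      fix t assume t: "t \<in> {0..T}"
      have bd: "bdd_above ((\<lambda>t. \<bar>integral\<^sup>L (fs n (l n t)) g - integral\<^sup>L (f t) g\<bar>) ` {0..T})"
      proof (intro bdd_aboveI[where M="2*K"])
        fix x assume "x \<in> (\<lambda>t. \<bar>integral\<^sup>L (fs n (l n t)) g - integral\<^sup>L (f t) g\<bar>) ` {0..T}"
        then obtain s where x: "x = \<bar>integral\<^sup>L (fs n (l n s)) g - integral\<^sup>L (f s) g\<bar>" by auto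
        show "x \<le> 2*K" using bnd[OF fsM[of n "l n s"]] bnd[OF fM[of s]] unfolding x abs_le_iff by linarith
      qed
      have "\<bar>psi a (integral\<^sup>L (fs n (l n t)) g) - psi a (integral\<^sup>L (f t) g)\<bar>
          \<le> \<bar>integral\<^sup>L (fs n (l n t)) g - integral\<^sup>L (f t) g\<bar>" by (rule psi_lip)
      also have "\<dots> \<le> d n" unfolding d_def by (rule cSUP_upper[OF t bd])
      finally show "\<bar>psi a (integral\<^sup>L (fs n (l n t)) g) - psi a (integral\<^sup>L (f t) g)\<bar> \<le> d n" .
    qed
    ultimately show ?thesis by (simp add: GG_def)
  qed
  have "(\<lambda>n. GG T g a (fs n) - GG T g a f) \<longlonglongrightarrow> 0"
    by (rule Lim_null_comparison[OF _ d0]) (use le in auto)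
  then show ?thesis by (rule LIM_zero_cancel)
qed

lemma GG_meas: "GG T g a \<in> borel_measurable (skor_borel T)"
proof (rule borel_measurableI)
  fix S :: "real set" assume S: "open S"
  have sp: "space (skor_borel T) = Dsp T"
    unfolding skor_borel_def by (rule space_measure_of) (auto simp: skor_open_def)
  have ss: "sets (skor_borel T) = sigma_sets (Dsp T) {U. skor_open T U}"
    unfolding skor_borel_def by (rule sets_measure_of) (auto simp: skor_open_def)
  have "skor_open T (GG T g a -` S \<inter> Dsp T)"
    unfolding skor_open_def
  proof (intro conjI ballI allI impI)
    fix f fs assume f: "f \<in> GG T g a -` S \<inter> Dsp T" and h: "(\<forall>n. fs n \<in> Dsp T) \<and> skor_conv T fs f"
    have "(\<lambda>n. GG T g a (fs n)) \<longlonglongrightarrow> GG T g a f"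
      using GG_cont[of fs f] f h by auto
    then have "\<forall>\<^sub>F n in sequentially. GG T g a (fs n) \<in> S"
      using S f by (auto dest: topological_tendstoD)
    then show "\<forall>\<^sub>F n in sequentially. fs n \<in> GG T g a -` S \<inter> Dsp T"
      using h by (auto elim: eventually_mono)
  qed auto
  then show "GG T g a -` S \<inter> space (skor_borel T) \<in> sets (skor_borel T)"
    unfolding sp ss by auto
qed

lemma GG_Cb: "GG T g a \<in> skor_Cb T"
  unfolding skor_Cb_def
proof (intro CollectI conjI exI allI impI ballI)
  fix f assume "f \<in> Dsp T"
  then have "\<And>t. f t \<in> M1" by (simp add: Dsp_def)
  then show "\<bar>GG T g a f\<bar> \<le> 1" using GG_bounds by auto
next
  fix fs f assume "(\<forall>n. fs n \<in> Dsp T) \<and> f \<in> Dsp T \<and> skor_conv T fs f"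
  then show "(\<lambda>n. GG T g a (fs n)) \<longlonglongrightarrow> GG T g a f" using GG_cont by blast
qed

end


lemma unif_integral:
  fixes f :: "nat \<Rightarrow> real"
  assumes N: "N \<ge> 1" and nn: "\<And>i. f i \<ge> 0"
  shows "integral\<^sup>L (uniform_measure (count_space UNIV) {..<N}) f = (\<Sum>i<N. f i) / real N"
proof -
  have "integral\<^sup>L (uniform_measure (count_space UNIV) {..<N}) f
      = enn2real (\<integral>\<^sup>+ x. ennreal (f x) \<partial>uniform_measure (count_space UNIV) {..<N})"
    by (subst integral_eq_nn_integral) (auto simp: nn)
  also have "(\<integral>\<^sup>+ x. ennreal (f x) \<partial>uniform_measure (count_space UNIV) {..<N})
     = (\<integral>\<^sup>+ x. ennreal (f x) * indicator {..<N} x \<partial>count_space UNIV) / emeasure (count_space UNIV) {..<N}"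
    by (subst nn_integral_uniform_measure) auto
  also have "(\<integral>\<^sup>+ x. ennreal (f x) * indicator {..<N} x \<partial>count_space UNIV) = (\<Sum>i<N. ennreal (f i))"
    by (subst nn_integral_count_space_indicator[symmetric]) (auto simp: nn_integral_count_space_finite)
  also have "(\<Sum>i<N. ennreal (f i)) = ennreal (\<Sum>i<N. f i)"
    by (simp add: nn sum_nonneg)
  also have "emeasure (count_space UNIV) {..<N} = ennreal (real N)" by (simp add: ennreal_of_nat_eq_real_of_nat)
  finally show ?thesis using N
    by (simp add: divide_ennreal sum_nonneg nn)
qed

definition hh :: "(real \<Rightarrow> real) \<Rightarrow> nat \<Rightarrow> real \<Rightarrow> real" where
  "hh S n p = min (S p) (real n) * max 0 (min 1 (real n + 1 - \<bar>p\<bar>))"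

definition gg :: "(real \<Rightarrow> real) \<Rightarrow> nat \<Rightarrow> real \<times> real \<Rightarrow> real" where
  "gg S n z = hh S n (snd z)"

lemma hh_bounds: assumes "\<And>p. 0 \<le> S p"
  shows "0 \<le> hh S n p" "hh S n p \<le> real n" "hh S n p \<le> S p"
proof -
  have c: "0 \<le> max 0 (min 1 (real n + 1 - \<bar>p\<bar>))" "max 0 (min 1 (real n + 1 - \<bar>p\<bar>)) \<le> 1" by auto
  have m: "0 \<le> min (S p) (real n)" using assms by auto
  show "0 \<le> hh S n p" unfolding hh_def using c m by simp
  have "min (S p) (real n) * max 0 (min 1 (real n + 1 - \<bar>p\<bar>)) \<le> min (S p) (real n)"
    using mult_left_mono[OF c(2) m] by simp
  then show "hh S n p \<le> real n" "hh S n p \<le> S p" unfolding hh_def by auto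
qed

lemma hh_mono: assumes "\<And>p. 0 \<le> S p" and "n \<le> k"
  shows "hh S n p \<le> hh S k p"
  unfolding hh_def using assms
  by (intro mult_mono) auto

lemma hh_eventually: assumes "real n \<ge> S p" "real n \<ge> \<bar>p\<bar>"
  shows "hh S n p = S p"
  using assms unfolding hh_def by auto

lemma hh_cont: assumes "continuous_on UNIV S" shows "continuous_on UNIV (hh S n)"
  unfolding hh_def by (intro continuous_intros continuous_on_subset[OF assms]) auto

lemma gg_Cc: assumes "continuous_on UNIV S"
  shows "gg S n \<in> Cc_test"
proof -
  have "continuous_on UNIV (\<lambda>z::real\<times>real. hh S n (snd z))"
    by (rule continuous_on_compose2[OF hh_cont[OF assms]]) (auto intro: continuous_intros)
  moreover have "\<bar>p\<bar> > real n + 1 \<Longrightarrow> hh S n p = 0" for p by (auto simp: hh_def)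
  ultimately show ?thesis unfolding Cc_test_def gg_def by (auto intro!: exI[where x="real n + 1"])
qed

lemma Qk_zero:
  assumes F: "F \<in> borel_measurable (skor_borel T)" and Z: "\<And>w. w \<in> space P \<Longrightarrow> F (E w) = 0"
  shows "integral\<^sup>L (distr P (skor_borel T) E) F = 0"
proof (rule integral_eq_zero_AE)
  let ?N = "F -` (- {0}) \<inter> space (skor_borel T)"
  have Ns: "?N \<in> sets (skor_borel T)" using F by measurable
  have "emeasure (distr P (skor_borel T) E) ?N = 0"
  proof -
    have e: "E -` F -` (- {0}) \<inter> E -` space (skor_borel T) \<inter> space P = {}" using Z by auto
    show ?thesis unfolding distr_def emeasure_measure_of_conv by (simp add: e)
  qed
  then have "?N \<in> null_sets (distr P (skor_borel T) E)" using Ns by (simp add: null_sets_def)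
  then show "AE x in distr P (skor_borel T) E. F x = 0"
    by (rule AE_I') auto
qed

lemma empirical_integral:
  assumes N: "N \<ge> 1" and S: "continuous_on UNIV S" "\<And>p. 0 \<le> S p"
  shows "integral\<^sup>L (empirical T N Xn om w t) (gg S n) = (\<Sum>i<N. hh S n (om i)) / real N"
proof -
  have gm: "gg S n \<in> borel_measurable borel"
    using gg_Cc[OF S(1)] by (intro borel_measurable_continuous_onI) (simp add: Cc_test_def)
  have "integral\<^sup>L (empirical T N Xn om w t) (gg S n)
     = integral\<^sup>L (uniform_measure (count_space UNIV) {..<N}) (\<lambda>i. hh S n (om i))"
    unfolding empirical_def
    by (subst integral_distr) (auto simp: gm gg_def measurable_cong_sets[OF sets_uniform_measure refl])
  also have "\<dots> = (\<Sum>i<N. hh S n (om i)) / real N"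
    by (rule unif_integral[OF N]) (rule hh_bounds[OF S(2)])
  finally show ?thesis .
qed


lemma final_bound:
  assumes S: "continuous_on UNIV S" "\<And>p. 0 \<le> S p"
    and m: "m \<in> M1" and H: "\<And>n. integral\<^sup>L m (gg S n) \<le> a"
  shows "(\<integral>\<^sup>+ p. ennreal (S p) \<partial>distr m borel snd) \<le> ennreal a"
proof -
  interpret prob_space m using m by (simp add: M1_def)
  have sm: "sets m = sets borel" using m by (simp add: M1_def)
  have snd_m: "snd \<in> measurable m borel"
    using measurable_cong_sets[OF sm refl] borel_measurable_continuous_onI[OF continuous_on_snd[OF continuous_on_id]]
    by (metis (no_types, lifting) continuous_on_snd continuous_on_id borel_measurable_continuous_onI)
  let ?D = "distr m borel snd"
  interpret D: prob_space ?D by (rule prob_space_distr[OF snd_m])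
  have hm: "hh S n \<in> borel_measurable borel" for n
    by (rule borel_measurable_continuous_onI[OF hh_cont[OF S(1)]])
  have hint: "integrable ?D (hh S n)" for n
    by (rule D.integrable_const_bound[where B="real n"]) (use hh_bounds[OF S(2)] hm in auto)
  have eq: "integral\<^sup>L ?D (hh S n) = integral\<^sup>L m (gg S n)" for n
    by (subst integral_distr[OF snd_m hm]) (simp add: gg_def[abs_def])
  have nn: "(\<integral>\<^sup>+ p. ennreal (hh S n p) \<partial>?D) \<le> ennreal a" for n
  proof -
    have "(\<integral>\<^sup>+ p. ennreal (hh S n p) \<partial>?D) = ennreal (integral\<^sup>L ?D (hh S n))"
      by (rule nn_integral_eq_integral[OF hint]) (use hh_bounds[OF S(2)] in auto)
    also have "\<dots> \<le> ennreal a" using eq H by (simp add: ennreal_leI)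
    finally show ?thesis .
  qed
  have pw: "ennreal (S p) = (SUP n. ennreal (hh S n p))" for p
  proof (rule antisym)
    obtain n where n: "max (S p) \<bar>p\<bar> \<le> real n" using real_arch_simple by blast
    have "ennreal (S p) = ennreal (hh S n p)" using hh_eventually[of S p n] n by auto
    also have "\<dots> \<le> (SUP n. ennreal (hh S n p))" by (rule SUP_upper) auto
    finally show "ennreal (S p) \<le> (SUP n. ennreal (hh S n p))" .
    show "(SUP n. ennreal (hh S n p)) \<le> ennreal (S p)"
      using hh_bounds(3)[OF S(2)] by (intro SUP_least ennreal_leI) auto
  qed
  have inc: "incseq (\<lambda>n p. ennreal (hh S n p))"
    by (auto simp: incseq_def le_fun_def intro!: ennreal_leI hh_mono[OF S(2)])
  have "(\<integral>\<^sup>+ p. ennreal (S p) \<partial>?D) = (\<integral>\<^sup>+ p. (SUP n. ennreal (hh S n p)) \<partial>?D)"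
    by (simp add: pw[symmetric])
  also have "\<dots> = (SUP n. (\<integral>\<^sup>+ p. ennreal (hh S n p) \<partial>?D))"
    by (rule nn_integral_monotone_convergence_SUP[OF inc]) (use hm in auto)
  also have "\<dots> \<le> ennreal a" by (rule SUP_least) (rule nn)
  finally show ?thesis .
qed

lemma eps_le: fixes x a :: real assumes "\<And>m. x \<le> a + 1 / real (Suc m)" shows "x \<le> a"
proof -
  have "(\<lambda>m. a + 1 / real (Suc m)) \<longlonglongrightarrow> a + 0"
    by (intro tendsto_intros LIMSEQ_Suc[OF lim_inverse_n']) 
  then show ?thesis using assms by (intro LIMSEQ_le_const[where X="\<lambda>m. a + 1 / real (Suc m)"]) auto
qed

lemma supc_nonneg:
  assumes "\<exists>L. \<forall>x x' w. \<bar>c x w - c x' w\<bar> \<le> L * \<bar>x - x'\<bar>"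
  shows "0 \<le> supc c w"
proof -
  obtain L where L: "\<And>x x'. \<bar>c x w - c x' w\<bar> \<le> L * \<bar>x - x'\<bar>" using assms by blast
  have bd: "bdd_above ((\<lambda>x. \<bar>c x w\<bar>) ` {0..<2*pi})"
  proof (intro bdd_aboveI[where M="\<bar>c 0 w\<bar> + \<bar>L\<bar> * (2*pi)"])
    fix y assume "y \<in> (\<lambda>x. \<bar>c x w\<bar>) ` {0..<2*pi}"
    then obtain x where x: "x \<in> {0..<2*pi}" "y = \<bar>c x w\<bar>" by auto
    have "L * \<bar>x - 0\<bar> \<le> \<bar>L\<bar> * (2*pi)"
      using x(1) by (intro order_trans[OF abs_ge_self[of "L * \<bar>x - 0\<bar>"]]) (auto simp: abs_mult intro!: mult_left_mono)
    then show "y \<le> \<bar>c 0 w\<bar> + \<bar>L\<bar> * (2*pi)" using L[of x 0] x(2) by linarith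
  qed
  have "0 \<le> \<bar>c 0 w\<bar>" by simp
  also have "\<dots> \<le> supc c w" unfolding supc_def by (rule cSUP_upper[OF _ bd]) auto
  finally show ?thesis .
qed


lemma GG_zero:
  assumes T: "0 \<le> T" and H: "\<And>t. t \<in> {0..T} \<Longrightarrow> integral\<^sup>L (f t) g \<le> a"
  shows "GG T g a f = 0"
proof -
  have "GG T g a f = (SUP t\<in>{0..T}. (0::real))"
    unfolding GG_def
  proof (rule SUP_cong)
    fix t assume "t \<in> {0..T}"
    then have "integral\<^sup>L (f t) g \<le> a" by (rule H)
    then show "psi a (integral\<^sup>L (f t) g) = 0" by (simp add: psi_def)
  qed simp
  then show ?thesis using T by simp
qed

theorem mainTheorem6:
  fixes T :: real
    and b :: "real \<Rightarrow> real \<Rightarrow> real \<Rightarrow> real"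
    and c :: "real \<Rightarrow> real \<Rightarrow> real"
    and \<mu> :: "real measure"
    and om :: "nat \<Rightarrow> real"
    and P :: "'o measure"
    and B :: "nat \<Rightarrow> 'o \<Rightarrow> real \<Rightarrow> real"
    and xi :: "nat \<Rightarrow> 'o \<Rightarrow> real"
    and X :: "nat \<Rightarrow> nat \<Rightarrow> 'o \<Rightarrow> real \<Rightarrow> real"
    and Q :: "(real \<Rightarrow> (real \<times> real) measure) measure"
  assumes T_pos: "T > 0"
    and b_per: "\<forall>y w. periodic1 (\<lambda>x. b x y w)" "\<forall>x w. periodic1 (\<lambda>y. b x y w)"
    and b_bdd: "\<exists>K. \<forall>x y w. \<bar>b x y w\<bar> \<le> K"
    and b_lip: "\<exists>L. \<forall>x x' y y' w. \<bar>b x y w - b x' y' w\<bar> \<le> L * (\<bar>x - x'\<bar> + \<bar>y - y'\<bar>)"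
    and c_per: "\<forall>w. periodic1 (\<lambda>x. c x w)"
    and c_lip: "\<exists>L. \<forall>x x' w. \<bar>c x w - c x' w\<bar> \<le> L * \<bar>x - x'\<bar>"
    and S_cont: "continuous_on UNIV (supc c)"
    and mu: "prob_space \<mu>" "sets \<mu> = sets borel"
    and S_int: "integrable \<mu> (supc c)"
    and S_lln: "(\<lambda>N. (\<Sum>i<N. supc c (om i)) / real N) \<longlonglongrightarrow> (\<integral>p. supc c p \<partial>\<mu>)"
    and P: "prob_space P"
    and BM: "\<forall>i. prob_space.brownian_motion P (B i)"
    and B_indep: "prob_space.indep_vars P (\<lambda>_. Pi\<^sub>M UNIV (\<lambda>_. borel)) B UNIV"
    and xi_rv: "\<forall>i. xi i \<in> borel_measurable P"
    and xi_indep: "prob_space.indep_var P (Pi\<^sub>M UNIV (\<lambda>_. Pi\<^sub>M UNIV (\<lambda>_. borel)))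
                      (\<lambda>w i (_::real). xi i w)
                      (Pi\<^sub>M UNIV (\<lambda>_. Pi\<^sub>M UNIV (\<lambda>_. borel))) (\<lambda>w i. B i w)"
    and X_cont: "\<forall>N i w. N \<ge> 1 \<and> i < N \<and> w \<in> space P \<longrightarrow> continuous_on {0..T} (X N i w)"
    and X_eq: "\<forall>N i w t. N \<ge> 1 \<and> i < N \<and> w \<in> space P \<and> t \<in> {0..T} \<longrightarrow>
        X N i w t = xi i w
          + integral {0..t} (\<lambda>s. (\<Sum>j<N. b (X N i w s) (X N j w s) (om j)) / real N
                                 + c (X N i w s) (om i))
          + B i w t"
    and Q_M1: "Q \<in> skor_M1 T"
    and Q_acc: "\<exists>r. strict_mono r \<and> skor_weak_conv T
        (\<lambda>k. distr P (skor_borel T) (\<lambda>w. empirical T (r k) (X (r k)) om w)) Q"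
  shows "AE \<nu> in Q. \<forall>t\<in>{0..T}.
           (\<integral>\<^sup>+ p. ennreal (supc c p) \<partial>(distr (\<nu> t) borel snd))
             \<le> (\<integral>\<^sup>+ p. ennreal (supc c p) \<partial>\<mu>)"
  proof -
  have S0: "\<And>p. 0 \<le> supc c p" using supc_nonneg[OF c_lip] by blast
  note Sc = S_cont
  define a where "a = (\<integral>p. supc c p \<partial>\<mu>)"
  obtain r where r: "strict_mono r" and wc: "skor_weak_conv T
        (\<lambda>k. distr P (skor_borel T) (\<lambda>w. empirical T (r k) (X (r k)) om w)) Q"
    using Q_acc by blast
  interpret Q: prob_space Q using Q_M1 by (simp add: skor_M1_def)
  have spQ: "space Q = Dsp T" and setsQ: "sets Q = sets (skor_borel T)"
    using Q_M1 by (auto simp: skor_M1_def)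
  have T0: "0 \<le> T" using T_pos by simp
  have gb: "\<And>z. 0 \<le> gg (supc c) n z \<and> gg (supc c) n z \<le> real n" for n
    using hh_bounds[OF S0] by (simp add: gg_def)
  define F where "F n m = GG T (gg (supc c) n) (a + 1 / real (Suc m))" for n m
  have FCb: "F n m \<in> skor_Cb T" for n m
    unfolding F_def by (rule GG_Cb[OF T0 gg_Cc[OF Sc] gb])
  have Fmeas: "F n m \<in> borel_measurable (skor_borel T)" for n m
    unfolding F_def by (rule GG_meas[OF T0 gg_Cc[OF Sc] gb])
  have ae: "AE \<nu> in Q. F n m \<nu> = 0" for n m
  proof -
    have lim: "(\<lambda>k. integral\<^sup>L (distr P (skor_borel T) (\<lambda>w. empirical T (r k) (X (r k)) om w)) (F n m))
       \<longlonglongrightarrow> integral\<^sup>L Q (F n m)"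
      using wc FCb unfolding skor_weak_conv_def by blast
    have "a < a + 1 / real (Suc m)" by simp
    from order_tendstoD(2)[OF S_lln[folded a_def] this]
    obtain N0 where N0: "\<And>N. N \<ge> N0 \<Longrightarrow> (\<Sum>i<N. supc c (om i)) / real N < a + 1 / real (Suc m)"
      unfolding eventually_sequentially by blast
    have "\<forall>\<^sub>F k in sequentially.
       integral\<^sup>L (distr P (skor_borel T) (\<lambda>w. empirical T (r k) (X (r k)) om w)) (F n m) = 0"
    proof (rule eventually_sequentiallyI[of "max N0 1"])
      fix k assume k: "max N0 1 \<le> k"
      have rk: "max N0 1 \<le> r k" using k seq_suble[OF r, of k] by linarith
      show "integral\<^sup>L (distr P (skor_borel T) (\<lambda>w. empirical T (r k) (X (r k)) om w)) (F n m) = 0"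
      proof (rule Qk_zero[OF Fmeas])
        fix w
        show "F n m (empirical T (r k) (X (r k)) om w) = 0"
          unfolding F_def
        proof (rule GG_zero[OF T0])
          fix t
          have "integral\<^sup>L (empirical T (r k) (X (r k)) om w t) (gg (supc c) n)
              = (\<Sum>i<r k. hh (supc c) n (om i)) / real (r k)"
            using rk by (intro empirical_integral[OF _ Sc S0]) auto
          also have "\<dots> \<le> (\<Sum>i<r k. supc c (om i)) / real (r k)"
            by (intro divide_right_mono sum_mono hh_bounds[OF S0]) auto
          also have "\<dots> < a + 1 / real (Suc m)" using N0 rk by auto
          finally show "integral\<^sup>L (empirical T (r k) (X (r k)) om w t) (gg (supc c) n) \<le> a + 1 / real (Suc m)"
            by simp
        qed
      qed
    qed
    then have "integral\<^sup>L Q (F n m) = 0"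
      using LIMSEQ_unique[OF lim tendsto_eventually] by blast
    moreover have Fm: "F n m \<in> borel_measurable Q"
      using Fmeas measurable_cong_sets[OF setsQ refl] by blast
    have bnds: "\<nu> \<in> space Q \<Longrightarrow> 0 \<le> F n m \<nu> \<and> F n m \<nu> \<le> 1" for \<nu>
      using GG_bounds[OF T0 gg_Cc[OF Sc] gb, of \<nu>] spQ unfolding F_def by (auto simp: Dsp_def)
    have int: "integrable Q (F n m)"
      by (rule Q.integrable_const_bound[where B=1]) (use bnds Fm in auto)
    ultimately show ?thesis
      using integral_nonneg_eq_0_iff_AE[OF int] bnds by (auto intro: AE_I2)
  qed
  then have "AE \<nu> in Q. \<forall>n m. F n m \<nu> = 0" by (simp add: AE_all_countable)
  moreover have "AE \<nu> in Q. \<nu> \<in> space Q" by (rule AE_space)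
  ultimately show ?thesis
  proof eventually_elim
    case (elim \<nu>)
    then have \<nu>M: "\<And>t. \<nu> t \<in> M1" using spQ by (auto simp: Dsp_def)
    have rhs: "(\<integral>\<^sup>+ p. ennreal (supc c p) \<partial>\<mu>) = ennreal a"
      unfolding a_def by (rule nn_integral_eq_integral[OF S_int]) (use S0 in auto)
    show ?case
    proof
      fix t assume t: "t \<in> {0..T}"
      have "integral\<^sup>L (\<nu> t) (gg (supc c) n) \<le> a" for n
      proof (rule eps_le)
        fix m
        have "psi (a + 1 / real (Suc m)) (integral\<^sup>L (\<nu> t) (gg (supc c) n)) \<le> F n m \<nu>"
          unfolding F_def by (rule GG_upper[OF T0 gg_Cc[OF Sc] gb \<nu>M t])
        then show "integral\<^sup>L (\<nu> t) (gg (supc c) n) \<le> a + 1 / real (Suc m)"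
          using elim by (auto simp: psi_def)
      qed
      then show "(\<integral>\<^sup>+ p. ennreal (supc c p) \<partial>distr (\<nu> t) borel snd) \<le> (\<integral>\<^sup>+ p. ennreal (supc c p) \<partial>\<mu>)"
        unfolding rhs by (intro final_bound[OF Sc S0 \<nu>M])
    qed
  qed
qed

end
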